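(* Let $m\ge1$, $q=2^m$, let $n$ be odd, and let $L$ and $\lambda$ be $2$-linear polynomials over $\mathbb F_{q^n}$ such that $L^\prime(\ker\mathrm{Tr})=\lambda^\prime(\ker\mathrm{Tr})=\ker\mathrm{Tr}$ and $\mathrm{Tr}(\lambda^\prime(x))=0$ for all $x\in\mathbb F_{q^n}$. Then both $\mathrm{Tr}(x^{q+1})+L(\lambda(x))$ and $\mathrm{Tr}(x^{q+1})+\lambda(L(x))$ are permutation polynomials of $\mathbb F_{q^n}$.
   Context: $\mathrm{Tr}$ denotes the trace map of $\mathbb F_{q^n}$ over $\mathbb F_q$. A $2$-linear polynomial over $\mathbb F_{q^n}$ has the form $\sum_{j=0}^{mn-1}a_jx^{2^j}$; its adjoint is $\sum_j(a_jx)^{2^{-j}}$, where $y\mapsto y^{2^{-j}}$ is the inverse of $y\mapsto y^{2^j}$ on $\mathbb F_{q^n}$. Polynomials are regarded as maps on $\mathbb F_{q^n}$. *)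

theory Defs
  imports Main
begin

text \<open>The field F_{q^n}, q = 2^m, is modelled as a finite field type 'a with
  CARD('a) = 2^(m*n). Tr is the trace to F_q: Tr x = sum_{i<n} x^(q^i).\<close>

definition trace :: "nat \<Rightarrow> nat \<Rightarrow> 'a::field \<Rightarrow> 'a" where
  "trace q n x = (\<Sum>i<n. x ^ (q ^ i))"

definition lin2 :: "nat \<Rightarrow> (nat \<Rightarrow> 'a::field) \<Rightarrow> 'a \<Rightarrow> 'a" where
  "lin2 N a x = (\<Sum>j<N. a j * x ^ (2 ^ j))"

text \<open>Adjoint: sum_j (a_j x)^(2^(-j)); on a field of order 2^N the inverse of
  y \<mapsto> y^(2^j) is y \<mapsto> y^(2^((N - j) mod N)).\<close>
definition lin2_adj :: "nat \<Rightarrow> (nat \<Rightarrow> 'a::field) \<Rightarrow> 'a \<Rightarrow> 'a" where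
  "lin2_adj N a x = (\<Sum>j<N. (a j * x) ^ (2 ^ ((N - j) mod N)))"

end

theory Submission imports Defs "HOL-Computational_Algebra.Polynomial"
begin

lemma pow_card: fixes x :: "'a::{field,finite}" shows "x ^ card (UNIV :: 'a set) = x"
proof (cases "x = 0")
  case True
  then show ?thesis by (simp add: finite_UNIV_card_ge_0)
next
  case False
  define S where "S = (UNIV - {0::'a})"
  have fin: "finite S" by simp
  have inj: "inj_on ((*) x) S" using False by (auto simp: inj_on_def)
  have img: "(*) x ` S = S"
  proof
    show "(*) x ` S \<subseteq> S" using False by (auto simp: S_def)
    show "S \<subseteq> (*) x ` S"
    proof
      fix y assume "y \<in> S"
      then have "y = x * (y / x)" "y / x \<in> S" using False by (auto simp: S_def)
      then show "y \<in> (*) x ` S" by blast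
    qed
  qed
  have "prod id S = prod id ((*) x ` S)" using img by simp
  also have "\<dots> = prod (\<lambda>y. x * y) S" using prod.reindex[OF inj, of id] by simp
  also have "\<dots> = x ^ card S * prod id S" by (simp add: prod.distrib)
  finally have e: "prod id S = x ^ card S * prod id S" .
  have "prod id S \<noteq> 0" using fin by (simp add: S_def)
  with e have xS: "x ^ card S = 1" by simp
  have "UNIV = insert 0 S" by (auto simp: S_def)
  moreover have "(0::'a) \<notin> S" by (simp add: S_def)
  then have "card (insert 0 S) = Suc (card S)" by (rule card_insert_disjoint[OF fin])
  ultimately have "card (UNIV :: 'a set) = Suc (card S)" by metis
  with xS have "x ^ card (UNIV :: 'a set) = x * 1" by simp
  then show ?thesis by simp
qed

lemma char2: assumes "card (UNIV :: 'a::{field,finite} set) = 2 ^ N" "N \<ge> 1" shows "(2::'a) = 0"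
proof -
  have "(-1::'a) ^ card (UNIV :: 'a set) = -1" by (rule pow_card)
  moreover have "even (card (UNIV :: 'a set))" using assms by (simp add: dvd_power)
  ultimately have "(1::'a) = -1" by simp
  then have "(1::'a) + 1 = 0" by (metis add.right_inverse)
  then show ?thesis by simp
qed

lemma frob_add: assumes "(2::'a::comm_ring_1) = 0"
  shows "((x::'a) + y) ^ (2 ^ k) = x ^ (2 ^ k) + y ^ (2 ^ k)"
proof (induction k)
  case 0 then show ?case by simp
next
  case (Suc k)
  have sq: "(u + v) ^ 2 = u ^ 2 + v ^ 2" for u v :: 'a
  proof -
    have "(u + v) ^ 2 = u^2 + v^2 + 2 * u * v" by (simp add: power2_eq_square algebra_simps)
    then show ?thesis using assms by simp
  qed
  have "(x + y) ^ (2 ^ Suc k) = ((x + y) ^ (2 ^ k)) ^ 2" by (simp add: power_mult[symmetric] mult.commute)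
  also have "\<dots> = (x ^ (2 ^ k)) ^ 2 + (y ^ (2 ^ k)) ^ 2" using Suc sq by simp
  finally show ?case by (simp add: power_mult[symmetric] mult.commute)
qed

lemma frob_sum: assumes "(2::'a::comm_ring_1) = 0"
  shows "(\<Sum>i\<in>A. f i :: 'a) ^ (2 ^ k) = (\<Sum>i\<in>A. f i ^ (2 ^ k))"
proof (induction A rule: infinite_finite_induct)
  case (infinite A) then show ?case using zero_power[of "2 ^ k"] by simp
next
  case empty then show ?case using zero_power[of "2 ^ k"] by simp
next
  case (insert a A) then show ?case by (simp add: frob_add[OF assms])
qed

lemma neg2: assumes "(2::'a::comm_ring_1) = 0" shows "- (x::'a) = x"
proof -
  have "x + x = 2 * x" by simp
  then have "x + x = 0" using assms by simp
  then show ?thesis by (metis add_eq_0_iff)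
qed

lemma sum_shift_pow: assumes "(z::'a::comm_ring_1) ^ (p ^ n) = z"
  shows "(\<Sum>i<n. (z ^ p) ^ (p ^ i)) = (\<Sum>i<n. z ^ (p ^ i))"
proof -
  have 1: "(\<Sum>i<n. (z ^ p) ^ (p ^ i)) = (\<Sum>i<n. z ^ (p ^ Suc i))"
    by (simp add: power_mult[symmetric])
  have 2: "z ^ (p ^ 0) + (\<Sum>i<n. z ^ (p ^ Suc i)) = (\<Sum>i<Suc n. z ^ (p ^ i))"
    by (rule sum.lessThan_Suc_shift[symmetric])
  have 3: "(\<Sum>i<Suc n. z ^ (p ^ i)) = (\<Sum>i<n. z ^ (p ^ i)) + z ^ (p ^ n)" by simp
  have "z + (\<Sum>i<n. z ^ (p ^ Suc i)) = (\<Sum>i<n. z ^ (p ^ i)) + z"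
    using 2 3 assms by (simp only: power_0 power_one_right)
  then have "(\<Sum>i<n. z ^ (p ^ Suc i)) = (\<Sum>i<n. z ^ (p ^ i))"
    by (metis add.commute add_left_cancel)
  with 1 show ?thesis by simp
qed


context
  fixes m n :: nat
  assumes m1: "m \<ge> 1" and nodd: "odd n" and cardF: "card (UNIV :: 'a::{field,finite} set) = 2 ^ (m * n)"
begin

lemma n1: "n \<ge> 1" using nodd by (cases n) auto

lemma c2: "(2::'a) = 0"
  using char2[OF cardF] m1 n1 by (metis le_trans mult_le_mono one_le_numeral mult_1 order_refl)

lemma fixN: "(x::'a) ^ (2 ^ (m * n)) = x"
  using pow_card[of x] cardF by simp

lemma fixq: "(x::'a) ^ ((2 ^ m) ^ n) = x"
  using fixN by (simp add: power_mult[symmetric])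

lemma negc: "- (x::'a) = x" by (rule neg2[OF c2])

lemma addself: "(x::'a) + x = 0"
  by (metis negc add.right_inverse)

lemma eq_of_add0: assumes "(x::'a) + y = 0" shows "x = y"
proof -
  have "x = x + (y + y)" by (simp add: addself)
  also have "\<dots> = (x + y) + y" by (simp add: add.assoc)
  finally show ?thesis using assms by simp
qed

lemma Tr_add: "trace (2 ^ m) n ((x::'a) + y) = trace (2 ^ m) n x + trace (2 ^ m) n y"
  unfolding trace_def by (simp add: power_mult[symmetric] frob_add[OF c2] sum.distrib)

lemma Tr_pow: "trace (2 ^ m) n ((x::'a) ^ (2 ^ m)) = trace (2 ^ m) n x"
  unfolding trace_def by (rule sum_shift_pow[OF fixq])

lemma Tr_K: "(trace (2 ^ m) n (x::'a)) ^ (2 ^ m) = trace (2 ^ m) n x"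
proof -
  have "(trace (2 ^ m) n x) ^ (2 ^ m) = (\<Sum>i<n. (x ^ ((2 ^ m) ^ i)) ^ (2 ^ m))"
    unfolding trace_def by (rule frob_sum[OF c2])
  also have "\<dots> = trace (2 ^ m) n (x ^ (2 ^ m))"
    unfolding trace_def by (simp add: power_mult[symmetric] mult.commute)
  finally show ?thesis using Tr_pow by simp
qed

lemma Kpow: assumes "(k::'a) ^ (2 ^ m) = k" shows "k ^ ((2 ^ m) ^ i) = k"
proof (induction i)
  case 0 then show ?case by simp
next
  case (Suc i)
  have "k ^ ((2 ^ m) ^ Suc i) = (k ^ (2 ^ m)) ^ ((2 ^ m) ^ i)" by (simp add: power_mult[symmetric])
  then show ?case using Suc assms by simp
qed

lemma Tr_scal: assumes "(k::'a) ^ (2 ^ m) = k" shows "trace (2 ^ m) n (k * w) = k * trace (2 ^ m) n w"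
  unfolding trace_def by (simp add: power_mult_distrib Kpow[OF assms] sum_distrib_left)

lemma Tr_const: assumes "(k::'a) ^ (2 ^ m) = k" shows "trace (2 ^ m) n k = k"
proof -
  have "trace (2 ^ m) n k = of_nat n * k" unfolding trace_def by (simp add: Kpow[OF assms])
  moreover obtain j where "n = 2 * j + 1" using nodd oddE by blast
  then have "(of_nat n :: 'a) = 1" using c2 by simp
  ultimately show ?thesis by simp
qed

lemma T_add: "trace 2 (m * n) ((x::'a) + y) = trace 2 (m * n) x + trace 2 (m * n) y"
  unfolding trace_def by (simp add: frob_add[OF c2] sum.distrib)

lemma T_zero: "trace 2 N (0::'a) = 0"
  unfolding trace_def by (simp add: power_0_left)

lemma T_sum: "trace 2 (m * n) (\<Sum>i\<in>A. f i :: 'a) = (\<Sum>i\<in>A. trace 2 (m * n) (f i))"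
proof (induction A rule: infinite_finite_induct)
  case (infinite A) then show ?case by (simp add: T_zero)
next
  case empty then show ?case by (simp add: T_zero)
next
  case (insert a A) then show ?case by (simp add: T_add)
qed

lemma T_sq: "trace 2 (m * n) ((z::'a) ^ 2) = trace 2 (m * n) z"
  unfolding trace_def by (rule sum_shift_pow[OF fixN])

lemma T_pow: "trace 2 (m * n) ((z::'a) ^ (2 ^ k)) = trace 2 (m * n) z"
proof (induction k)
  case 0 then show ?case by simp
next
  case (Suc k)
  have "z ^ (2 ^ Suc k) = (z ^ (2 ^ k)) ^ 2" by (simp add: power_mult[symmetric] mult.commute)
  then show ?case using Suc T_sq by simp
qed

lemma T_Tr: "trace 2 (m * n) (y::'a) = (\<Sum>i<m. (trace (2 ^ m) n y) ^ (2 ^ i))"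
proof -
  have "trace 2 (m * n) y = (\<Sum>j<n * m. y ^ (2 ^ j))" unfolding trace_def by (simp add: mult.commute)
  also have "\<dots> = (\<Sum>l<n. \<Sum>j\<in>{l * m..<l * m + m}. y ^ (2 ^ j))"
    by (rule sum.nat_group[symmetric])
  also have "\<dots> = (\<Sum>l<n. \<Sum>i<m. y ^ (2 ^ (i + l * m)))"
  proof (rule sum.cong[OF refl])
    fix l
    show "(\<Sum>j\<in>{l * m..<l * m + m}. y ^ (2 ^ j)) = (\<Sum>i<m. y ^ (2 ^ (i + l * m)))"
      using sum.shift_bounds_nat_ivl[of "\<lambda>j. y ^ (2 ^ j)" 0 "l * m" m]
      by (simp add: atLeast0LessThan add.commute)
  qed
  also have "\<dots> = (\<Sum>l<n. \<Sum>i<m. (y ^ ((2 ^ m) ^ l)) ^ (2 ^ i))"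
    by (simp add: power_mult[symmetric] power_add mult.commute)
  also have "\<dots> = (\<Sum>i<m. \<Sum>l<n. (y ^ ((2 ^ m) ^ l)) ^ (2 ^ i))"
    by (rule sum.swap)
  also have "\<dots> = (\<Sum>i<m. (trace (2 ^ m) n y) ^ (2 ^ i))"
    unfolding trace_def by (simp add: frob_sum[OF c2])
  finally show ?thesis .
qed


lemma T_nonzero: "\<exists>z::'a. trace 2 (m * n) z \<noteq> 0"
proof (rule ccontr)
  assume H: "\<not> (\<exists>z::'a. trace 2 (m * n) z \<noteq> 0)"
  define N where "N = m * n"
  have N1: "N \<ge> 1" using m1 n1 by (simp add: N_def)
  define p :: "'a poly" where "p = (\<Sum>j<N. monom 1 (2 ^ j))"
  have pz: "poly p z = trace 2 N z" for z
    unfolding p_def trace_def by (simp add: poly_sum poly_monom)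
  have "coeff p (2 ^ (N - 1)) = (\<Sum>j<N. if j = N - 1 then 1 else 0)"
    unfolding p_def by (simp add: coeff_sum coeff_monom)
  also have "\<dots> = 1" using N1 by simp
  finally have "p \<noteq> 0" by auto
  then have "card {x. poly p x = 0} \<le> degree p" by (rule card_poly_roots_bound)
  moreover have "{x. poly p x = 0} = UNIV" using H pz N_def by auto
  moreover have "degree p \<le> 2 ^ (N - 1)"
    unfolding p_def
  proof (rule degree_sum_le)
    fix j assume "j \<in> {..<N}"
    then have "(2::nat) ^ j \<le> 2 ^ (N - 1)" by (intro power_increasing) auto
    then show "degree (monom (1::'a) (2 ^ j)) \<le> 2 ^ (N - 1)" by (simp add: degree_monom_eq)
  qed simp
  moreover have "(2::nat) ^ (N - 1) < 2 ^ N" using N1 by (intro power_strict_increasing) auto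
  moreover have "card {x::'a. poly p x = 0} = 2 ^ N" using cardF N_def \<open>{x. poly p x = 0} = UNIV\<close> by simp
  ultimately show False by linarith
qed

lemma T_nondeg: assumes "\<forall>z. trace 2 (m * n) (w * z) = (0::'a)" shows "w = 0"
proof (rule ccontr)
  assume "w \<noteq> 0"
  obtain z0 :: 'a where "trace 2 (m * n) z0 \<noteq> 0" using T_nonzero by blast
  moreover have "w * (z0 / w) = z0" using \<open>w \<noteq> 0\<close> by simp
  ultimately show False using assms by metis
qed

lemma adj: "trace 2 (m * n) (lin2 (m * n) c x * y) = trace 2 (m * n) ((x::'a) * lin2_adj (m * n) c y)"
proof -
  define N where "N = m * n"
  have N1: "N \<ge> 1" using m1 n1 by (simp add: N_def)
  have hterm: "trace 2 N (c j * x ^ (2 ^ j) * y) = trace 2 N (x * (c j * y) ^ (2 ^ ((N - j) mod N)))"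
    if "j < N" for j
  proof -
    define e where "e = (N - j) mod N"
    have je: "x ^ (2 ^ j * 2 ^ e) = x"
    proof (cases "j = 0")
      case True then show ?thesis by (simp add: e_def)
    next
      case False
      then have "e = N - j" using that by (simp add: e_def)
      then have "2 ^ j * 2 ^ e = (2::nat) ^ N" using that by (simp add: power_add[symmetric])
      then show ?thesis using fixN N_def by simp
    qed
    have "trace 2 N (c j * x ^ (2 ^ j) * y) = trace 2 N ((c j * x ^ (2 ^ j) * y) ^ (2 ^ e))"
      using T_pow N_def by simp
    also have "(c j * x ^ (2 ^ j) * y) ^ (2 ^ e) = x ^ (2 ^ j * 2 ^ e) * (c j * y) ^ (2 ^ e)"
      by (simp add: power_mult_distrib power_mult[symmetric] mult_ac)
    finally show ?thesis using je by (simp add: e_def mult_ac)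
  qed
  have "trace 2 N (lin2 N c x * y) = (\<Sum>j<N. trace 2 N (c j * x ^ (2 ^ j) * y))"
    unfolding lin2_def N_def by (simp add: sum_distrib_right T_sum)
  also have "\<dots> = (\<Sum>j<N. trace 2 N (x * (c j * y) ^ (2 ^ ((N - j) mod N))))"
    using hterm by simp
  also have "\<dots> = trace 2 N (x * lin2_adj N c y)"
    unfolding lin2_adj_def N_def by (simp add: sum_distrib_left T_sum)
  finally show ?thesis by (simp add: N_def)
qed

lemma lin2_add: "lin2 N c ((x::'a) + y) = lin2 N c x + lin2 N c y"
  unfolding lin2_def using c2 by (simp add: frob_add distrib_left sum.distrib)

lemma lin2_zero: "lin2 N c (0::'a) = 0"
  unfolding lin2_def by (simp add: power_0_left)

lemma T_ker: assumes "(k::'a) ^ (2 ^ m) = k" "trace (2 ^ m) n w = 0"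
  shows "trace 2 (m * n) (k * w) = 0"
  using assms by (simp add: T_Tr Tr_scal power_0_left)

lemma keyK:
  assumes H: "{x::'a. trace (2 ^ m) n x = 0} \<subseteq> lin2_adj (m * n) c ` {x. trace (2 ^ m) n x = 0}"
    and hv: "(lin2 (m * n) c v) ^ (2 ^ m) = lin2 (m * n) c v"
  shows "v ^ (2 ^ m) = v"
proof -
  have eq: "trace 2 (m * n) (v * z ^ (2 ^ m)) = trace 2 (m * n) (v * z)" for z
  proof -
    have "trace (2 ^ m) n (z ^ (2 ^ m) + z) = 0" by (simp add: Tr_add Tr_pow addself)
    then have "z ^ (2 ^ m) + z \<in> lin2_adj (m * n) c ` {x. trace (2 ^ m) n x = 0}" using H by blast
    then obtain z' where z'1: "trace (2 ^ m) n z' = 0" and z'2: "z ^ (2 ^ m) + z = lin2_adj (m * n) c z'"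
      by blast
    have "trace 2 (m * n) (v * (z ^ (2 ^ m) + z)) = trace 2 (m * n) (v * lin2_adj (m * n) c z')"
      by (simp only: z'2)
    also have "\<dots> = trace 2 (m * n) (lin2 (m * n) c v * z')"
      by (rule adj[symmetric])
    also have "\<dots> = 0" by (rule T_ker[OF hv z'1])
    finally have "trace 2 (m * n) (v * z ^ (2 ^ m)) + trace 2 (m * n) (v * z) = 0"
      by (simp only: distrib_left T_add)
    then show ?thesis by (rule eq_of_add0)
  qed
  define y where "y = v ^ ((2 ^ m) ^ (n - 1))"
  have yq: "y ^ (2 ^ m) = v"
  proof -
    have "y ^ (2 ^ m) = v ^ ((2 ^ m) ^ (n - 1) * 2 ^ m)" unfolding y_def by (rule power_mult[symmetric])
    also have "((2::nat) ^ m) ^ (n - 1) * 2 ^ m = (2 ^ m) ^ n" using n1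
      by (intro power_minus_mult) simp
    finally show ?thesis using fixq by simp
  qed
  have "\<forall>z. trace 2 (m * n) ((y + v) * z) = 0"
  proof
    fix z
    have "trace 2 (m * n) (y * z) = trace 2 (m * n) ((y * z) ^ (2 ^ m))" by (rule T_pow[symmetric])
    also have "(y * z) ^ (2 ^ m) = v * z ^ (2 ^ m)" using yq by (simp only: power_mult_distrib)
    also have "trace 2 (m * n) (v * z ^ (2 ^ m)) = trace 2 (m * n) (v * z)" by (rule eq)
    finally have "trace 2 (m * n) (y * z) = trace 2 (m * n) (v * z)" .
    then show "trace 2 (m * n) ((y + v) * z) = 0" by (simp only: distrib_right T_add addself)
  qed
  then have "y + v = 0" by (rule T_nondeg)
  then have "y = v" by (rule eq_of_add0)
  then show ?thesis using yq by simp
qed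

lemma lamK:
  assumes H: "\<forall>x::'a. trace (2 ^ m) n (lin2_adj (m * n) c x) = 0"
    and hk: "k ^ (2 ^ m) = k"
  shows "lin2 (m * n) c k = 0"
proof (rule T_nondeg, rule allI)
  fix z
  have "trace 2 (m * n) (lin2 (m * n) c k * z) = trace 2 (m * n) (k * lin2_adj (m * n) c z)"
    by (rule adj)
  also have "\<dots> = 0" using T_ker[OF hk] H by simp
  finally show "trace 2 (m * n) (lin2 (m * n) c k * z) = 0" .
qed

lemma main_inj:
  fixes M :: "'a \<Rightarrow> 'a"
  assumes Madd: "\<And>x y. M (x + y) = M x + M y"
    and MK: "\<And>u. M u ^ (2 ^ m) = M u \<Longrightarrow> u ^ (2 ^ m) = u \<and> M u = 0"
  shows "bij (\<lambda>x. trace (2 ^ m) n (x ^ (2 ^ m + 1)) + M x)"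
proof -
  let ?Tr = "trace (2 ^ m) n"
  let ?f = "\<lambda>x. ?Tr (x ^ (2 ^ m + 1)) + M x"
  have "inj ?f"
  proof (rule injI)
    fix x y assume fxy: "?f x = ?f y"
    define u where "u = y + x"
    have yu: "y = x + u" using addself[of x] by (simp add: u_def algebra_simps)
    have pw: "(x + u) ^ (2 ^ m + 1) = x ^ (2 ^ m + 1) + (x ^ (2 ^ m) * u + u ^ (2 ^ m) * x) + u ^ (2 ^ m + 1)"
      by (simp add: frob_add[OF c2] algebra_simps)
    have "?f y = ?f x + (?Tr (x ^ (2 ^ m) * u + u ^ (2 ^ m) * x) + ?Tr (u ^ (2 ^ m + 1)) + M u)"
      unfolding yu pw by (simp add: Tr_add Madd algebra_simps)
    with fxy have z: "?Tr (x ^ (2 ^ m) * u + u ^ (2 ^ m) * x) + ?Tr (u ^ (2 ^ m + 1)) + M u = 0" by simp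
    then have "?Tr (x ^ (2 ^ m) * u + u ^ (2 ^ m) * x) + ?Tr (u ^ (2 ^ m + 1)) = M u"
      by (rule eq_of_add0)
    then have Mu: "M u = ?Tr (x ^ (2 ^ m) * u + u ^ (2 ^ m) * x + u ^ (2 ^ m + 1))"
      by (simp only: Tr_add)
    then have "M u ^ (2 ^ m) = M u" using Tr_K by simp
    then have uK: "u ^ (2 ^ m) = u" and M0: "M u = 0" using MK by auto
    have "?Tr (x ^ (2 ^ m) * u + u ^ (2 ^ m) * x) = ?Tr (u * (x ^ (2 ^ m) + x))"
      using uK by (simp add: algebra_simps)
    also have "\<dots> = u * (?Tr x + ?Tr x)" by (simp add: Tr_scal[OF uK] Tr_add Tr_pow)
    also have "\<dots> = 0" by (simp add: addself)
    finally have a1: "?Tr (x ^ (2 ^ m) * u + u ^ (2 ^ m) * x) = 0" .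
    have e1: "u ^ (2 ^ m + 1) = u * u" using uK by simp
    have "?Tr (u ^ (2 ^ m + 1)) = u * u" unfolding e1 using Tr_scal[OF uK, of u] Tr_const[OF uK] by simp
    with z a1 M0 have "u * u = 0" by simp
    then have "u = 0" by simp
    then show "x = y" using yu by simp
  qed
  then show ?thesis using finite_UNIV_inj_surj[of ?f] by (simp add: bij_def)
qed

end

theorem mainTheorem8:
  fixes m n :: nat and a b :: "nat \<Rightarrow> 'a::{field,finite}"
  assumes "m \<ge> 1" and "odd n"
    and "card (UNIV :: 'a set) = 2 ^ (m * n)"
    and "lin2_adj (m * n) a ` {x. trace (2 ^ m) n x = 0} = {x. trace (2 ^ m) n x = 0}"
    and "lin2_adj (m * n) b ` {x. trace (2 ^ m) n x = 0} = {x. trace (2 ^ m) n x = 0}"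
    and "\<forall>x. trace (2 ^ m) n (lin2_adj (m * n) b x) = 0"
  shows "bij (\<lambda>x. trace (2 ^ m) n (x ^ (2 ^ m + 1)) + lin2 (m * n) a (lin2 (m * n) b x)) \<and>
         bij (\<lambda>x. trace (2 ^ m) n (x ^ (2 ^ m + 1)) + lin2 (m * n) b (lin2 (m * n) a x))"
proof
  note A = assms(1-3)
  have H1: "{x::'a. trace (2 ^ m) n x = 0} \<subseteq> lin2_adj (m * n) a ` {x. trace (2 ^ m) n x = 0}"
    using assms(4) by simp
  have H2: "{x::'a. trace (2 ^ m) n x = 0} \<subseteq> lin2_adj (m * n) b ` {x. trace (2 ^ m) n x = 0}"
    using assms(5) by simp
  show "bij (\<lambda>x. trace (2 ^ m) n (x ^ (2 ^ m + 1)) + lin2 (m * n) a (lin2 (m * n) b x))"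
  proof (rule main_inj[OF A])
    fix x y :: 'a
    show "lin2 (m * n) a (lin2 (m * n) b (x + y)) = lin2 (m * n) a (lin2 (m * n) b x) + lin2 (m * n) a (lin2 (m * n) b y)"
      by (simp add: lin2_add[OF A])
  next
    fix u :: 'a
    assume h: "lin2 (m * n) a (lin2 (m * n) b u) ^ (2 ^ m) = lin2 (m * n) a (lin2 (m * n) b u)"
    have bK: "lin2 (m * n) b u ^ (2 ^ m) = lin2 (m * n) b u" by (rule keyK[OF A H1 h])
    have uK: "u ^ (2 ^ m) = u" by (rule keyK[OF A H2 bK])
    have "lin2 (m * n) b u = 0" by (rule lamK[OF A assms(6) uK])
    then show "u ^ (2 ^ m) = u \<and> lin2 (m * n) a (lin2 (m * n) b u) = 0"
      using uK by (simp add: lin2_zero[OF A])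
  qed
  show "bij (\<lambda>x. trace (2 ^ m) n (x ^ (2 ^ m + 1)) + lin2 (m * n) b (lin2 (m * n) a x))"
  proof (rule main_inj[OF A])
    fix x y :: 'a
    show "lin2 (m * n) b (lin2 (m * n) a (x + y)) = lin2 (m * n) b (lin2 (m * n) a x) + lin2 (m * n) b (lin2 (m * n) a y)"
      by (simp add: lin2_add[OF A])
  next
    fix u :: 'a
    assume h: "lin2 (m * n) b (lin2 (m * n) a u) ^ (2 ^ m) = lin2 (m * n) b (lin2 (m * n) a u)"
    have aK: "lin2 (m * n) a u ^ (2 ^ m) = lin2 (m * n) a u" by (rule keyK[OF A H2 h])
    have uK: "u ^ (2 ^ m) = u" by (rule keyK[OF A H1 aK])
    have "lin2 (m * n) b (lin2 (m * n) a u) = 0" by (rule lamK[OF A assms(6) aK])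
    then show "u ^ (2 ^ m) = u \<and> lin2 (m * n) b (lin2 (m * n) a u) = 0"
      using uK by simp
  qed
qed

end
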